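(* There is a universal constant $C>0$ such that for all $d,k\ge1$ and all $\alpha\in(0,1]$, $\mathrm{fat}_\alpha(\mathcal{H}_{k,d})\le\frac{Ck^2}{\alpha^2}\log^3\!\big(\frac{ek}{\alpha}\big)$.
   Context: $\mathcal{X}=\{x\in[-1,1]^d:\|x\|_2\le1\}$, $\mathrm{clip}(z)=\max\{-1,\min\{1,z\}\}$, $\mathcal{H}_{k,d}=\{x\mapsto\mathrm{clip}(\sum_{j=1}^ka_j\max\{0,w^j\cdot x\}): a_j\in[-1,1],\|w^j\|_2\le1\}$. Sequential fat-shattering dimension: for $\mathcal{F}\subseteq\mathbb{R}^{\mathcal X}$ and $\alpha>0$, complete binary trees $(x_u)_{u\in\{0,1\}^{<m}}\subseteq\mathcal X$ and $(s_u)_{u\in\{0,1\}^{<m}}\subseteq\mathbb R$ are $\alpha$-shattered by $\mathcal F$ if for every $b\in\{0,1\}^m$ there is $f_b\in\mathcal F$ with, for all $t<m$, $f_b(x_{b_{\le t}})\ge s_{b_{\le t}}+\alpha$ if $b_{t+1}=1$ and $f_b(x_{b_{\le t}})\le s_{b_{\le t}}-\alpha$ if $b_{t+1}=0$; $\mathrm{fat}_\alpha(\mathcal F)$ is the supremum of such $m$ (0 if none, $\infty$ if unbounded). *)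

theory Defs
  imports "HOL-Analysis.Analysis" "HOL-Library.Extended_Real"
begin

text \<open>Points of R^d are represented as functions nat => real vanishing outside {..<d}.\<close>

definition dotd :: "nat \<Rightarrow> (nat \<Rightarrow> real) \<Rightarrow> (nat \<Rightarrow> real) \<Rightarrow> real" where
  "dotd d w x = (\<Sum>i<d. w i * x i)"

definition vecs :: "nat \<Rightarrow> (nat \<Rightarrow> real) set" where
  "vecs d = {x. \<forall>i\<ge>d. x i = 0}"

definition Xdom :: "nat \<Rightarrow> (nat \<Rightarrow> real) set" where
  "Xdom d = {x \<in> vecs d. (\<forall>i<d. \<bar>x i\<bar> \<le> 1) \<and> sqrt (dotd d x x) \<le> 1}"

definition clip :: "real \<Rightarrow> real" where
  "clip z = max (-1) (min 1 z)"

definition Hkd :: "nat \<Rightarrow> nat \<Rightarrow> ((nat \<Rightarrow> real) \<Rightarrow> real) set" where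
  "Hkd k d = {(\<lambda>x. clip (\<Sum>j<k. a j * max 0 (dotd d (w j) x))) | a w.
      (\<forall>j<k. \<bar>a j\<bar> \<le> 1) \<and> (\<forall>j<k. w j \<in> vecs d \<and> sqrt (dotd d (w j) (w j)) \<le> 1)}"

text \<open>Complete binary trees of depth m: nodes are bit strings u of length < m;
  b_{<=t} is take t b and b_{t+1} is b ! t.\<close>

definition seq_shattered ::
  "('x \<Rightarrow> real) set \<Rightarrow> 'x set \<Rightarrow> real \<Rightarrow> nat \<Rightarrow> (bool list \<Rightarrow> 'x) \<Rightarrow> (bool list \<Rightarrow> real) \<Rightarrow> bool" where
  "seq_shattered F X \<alpha> m xt st \<longleftrightarrow>
     (\<forall>u. length u < m \<longrightarrow> xt u \<in> X) \<and>
     (\<forall>b. length b = m \<longrightarrow> (\<exists>f\<in>F. \<forall>t<m.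
        (b ! t \<longrightarrow> f (xt (take t b)) \<ge> st (take t b) + \<alpha>) \<and>
        (\<not> b ! t \<longrightarrow> f (xt (take t b)) \<le> st (take t b) - \<alpha>)))"

definition seq_fat :: "real \<Rightarrow> ('x \<Rightarrow> real) set \<Rightarrow> 'x set \<Rightarrow> enat" where
  "seq_fat \<alpha> F X = Sup (enat ` {m. \<exists>xt st. seq_shattered F X \<alpha> m xt st})"

end

theory Submission
  imports Defs "HOL-Probability.Hoeffding"
begin


lemma cosh_bound: "exp (a::real) + exp (-a) \<le> 2 * exp (a^2/2)"
proof -
  have key: "exp b + exp (-b) \<le> 2 * exp (b^2/2)" if "b \<ge> 0" for b :: real
  proof -
    have "-(2*b) * (1/2) + ln (1 + (1/2) * (exp (2*b) - 1)) \<le> (2*b)^2/8"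
      using Hoeffdings_lemma_aux[of "2*b" "1/2"] that by simp
    hence "ln ((1 + exp (2*b))/2) \<le> b + b^2/2"
      by (simp add: power2_eq_square field_simps)
    hence "(1 + exp (2*b))/2 \<le> exp (b + b^2/2)"
      by (metis add_pos_pos divide_pos_pos exp_gt_zero exp_le_cancel_iff exp_ln zero_less_one zero_less_numeral)
    hence "exp (-b) * ((1 + exp (2*b))/2) \<le> exp (-b) * exp (b + b^2/2)"
      by (intro mult_left_mono) auto
    moreover have "exp (-b) * ((1 + exp (2*b))/2) = (exp b + exp (-b))/2"
      by (simp add: field_simps flip: exp_add)
    moreover have "exp (-b) * exp (b + b^2/2) = exp (b^2/2)"
      by (simp flip: exp_add)
    ultimately show ?thesis by simp
  qed
  show ?thesis
  proof (cases "a \<ge> 0")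
    case True then show ?thesis using key by blast
  next
    case False then show ?thesis using key[of "-a"] by (simp add: add.commute)
  qed
qed

fun psum :: "nat \<Rightarrow> (bool list \<Rightarrow> real) \<Rightarrow> real" where
  "psum 0 F = F []"
| "psum (Suc m) F = psum m (\<lambda>b. F (True # b)) + psum m (\<lambda>b. F (False # b))"

lemma psum_mono: "(\<And>b. length b = m \<Longrightarrow> F b \<le> G b) \<Longrightarrow> psum m F \<le> psum m G"
proof (induction m arbitrary: F G)
  case 0 then show ?case by simp
next
  case (Suc m)
  have "psum m (\<lambda>b. F (True # b)) \<le> psum m (\<lambda>b. G (True # b))"
    by (rule Suc.IH) (simp add: Suc.prems)
  moreover have "psum m (\<lambda>b. F (False # b)) \<le> psum m (\<lambda>b. G (False # b))"
    by (rule Suc.IH) (simp add: Suc.prems)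
  ultimately show ?case by simp
qed

lemma psum_add: "psum m (\<lambda>b. F b + G b) = psum m F + psum m G"
  by (induction m arbitrary: F G) auto

lemma psum_diff: "psum m (\<lambda>b. F b - G b) = psum m F - psum m G"
  by (induction m arbitrary: F G) auto

lemma psum_cmult: "psum m (\<lambda>b. c * F b) = c * psum m F"
  by (induction m arbitrary: F) (auto simp: algebra_simps)

lemma psum_const: "psum m (\<lambda>b. c) = 2^m * c"
  by (induction m) auto

lemma psum_sum: "psum m (\<lambda>b. \<Sum>j\<in>A. F j b) = (\<Sum>j\<in>A. psum m (F j))"
proof (induction m arbitrary: F)
  case 0 then show ?case by simp
next
  case (Suc m) then show ?case by (simp add: sum.distrib)
qed

definition sg :: "bool \<Rightarrow> real" where "sg c = (if c then 1 else -1)"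

definition Sm :: "nat \<Rightarrow> (bool list \<Rightarrow> real) \<Rightarrow> bool list \<Rightarrow> real" where
  "Sm m f b = (\<Sum>t<m. sg (b ! t) * f (take t b))"

lemma Sm_Suc: "Sm (Suc m) f (c # b) = sg c * f [] + Sm m (\<lambda>u. f (c # u)) b"
  unfolding Sm_def sum.lessThan_Suc_shift by simp

lemma Sm_lin: "Sm m (\<lambda>u. f u + g u) b = Sm m f b + Sm m g b"
  unfolding Sm_def by (simp add: sum.distrib algebra_simps)

lemma Sm_diff: "Sm m (\<lambda>u. f u - g u) b = Sm m f b - Sm m g b"
  unfolding Sm_def by (simp add: sum_subtractf algebra_simps)

lemma Sm_cmult: "Sm m (\<lambda>u. c * f u) b = c * Sm m f b"
  unfolding Sm_def by (simp add: sum_distrib_left algebra_simps)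

lemma Sm_sum: "Sm m (\<lambda>u. \<Sum>j\<in>A. f j u) b = (\<Sum>j\<in>A. Sm m (f j) b)"
  unfolding Sm_def by (simp add: sum_distrib_left sum.swap[of _ A])

lemma psum_Sm_zero: "psum m (Sm m f) = 0"
proof (induction m arbitrary: f)
  case 0 then show ?case by (simp add: Sm_def)
next
  case (Suc m)
  have "psum (Suc m) (Sm (Suc m) f) =
     psum m (\<lambda>b. sg True * f [] + Sm m (\<lambda>u. f (True # u)) b) +
     psum m (\<lambda>b. sg False * f [] + Sm m (\<lambda>u. f (False # u)) b)"
    by (simp add: Sm_Suc)
  also have "\<dots> = 0"
    by (simp add: psum_add psum_diff psum_const Suc.IH sg_def)
  finally show ?case .
qed

lemma psum_exp_Sm:
  assumes "\<And>u. \<bar>f u\<bar> \<le> c"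
  shows "psum m (\<lambda>b. exp (l * Sm m f b)) \<le> 2^m * exp (real m * l^2 * c^2 / 2)"
  using assms
proof (induction m arbitrary: f)
  case 0 then show ?case by (simp add: Sm_def)
next
  case (Suc m)
  let ?E = "exp (real m * l^2 * c^2 / 2)"
  have eq: "psum (Suc m) (\<lambda>b. exp (l * Sm (Suc m) f b)) =
     exp (l * f []) * psum m (\<lambda>b. exp (l * Sm m (\<lambda>u. f (True # u)) b)) +
     exp (- (l * f [])) * psum m (\<lambda>b. exp (l * Sm m (\<lambda>u. f (False # u)) b))"
  proof -
    have a: "psum m (\<lambda>b. exp (l * Sm (Suc m) f (True # b))) = exp (l * f []) * psum m (\<lambda>b. exp (l * Sm m (\<lambda>u. f (True # u)) b))"
      by (simp add: Sm_Suc sg_def distrib_left exp_add psum_cmult)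
    have b: "psum m (\<lambda>b. exp (l * Sm (Suc m) f (False # b))) = exp (- (l * f [])) * psum m (\<lambda>b. exp (l * Sm m (\<lambda>u. f (False # u)) b))"
    proof -
      have "\<And>b. exp (l * Sm (Suc m) f (False # b)) = exp (- (l * f [])) * exp (l * Sm m (\<lambda>u. f (False # u)) b)"
      proof -
        fix b
        have "l * Sm (Suc m) f (False # b) = - (l * f []) + l * Sm m (\<lambda>u. f (False # u)) b"
          unfolding Sm_Suc sg_def by simp (rule right_diff_distrib)
        thus "exp (l * Sm (Suc m) f (False # b)) = exp (- (l * f [])) * exp (l * Sm m (\<lambda>u. f (False # u)) b)"
          by (simp only: exp_add)
      qed
      thus ?thesis by (simp add: psum_cmult)
    qed
    show ?thesis by (simp add: a b)
  qed
  have A: "psum m (\<lambda>b. exp (l * Sm m (\<lambda>u. f (True # u)) b)) \<le> 2^m * ?E"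
    by (rule Suc.IH) (simp add: Suc.prems)
  have B: "psum m (\<lambda>b. exp (l * Sm m (\<lambda>u. f (False # u)) b)) \<le> 2^m * ?E"
    by (rule Suc.IH) (simp add: Suc.prems)
  have 1: "psum (Suc m) (\<lambda>b. exp (l * Sm (Suc m) f b)) \<le>
      (exp (l * f []) + exp (- (l * f []))) * (2^m * ?E)"
    unfolding eq distrib_right
    by (rule add_mono; rule mult_left_mono) (use A B in auto)
  have sq: "(l * f [])^2 \<le> l^2 * c^2"
  proof -
    have "\<bar>f []\<bar> \<le> c" by (rule Suc.prems)
    hence "\<bar>f []\<bar>^2 \<le> c^2" by (intro power_mono) auto
    hence "(f [])^2 \<le> c^2" by simp
    thus ?thesis unfolding power_mult_distrib by (rule mult_left_mono) auto
  qed
  have 2: "(exp (l * f []) + exp (- (l * f []))) * (2^m * ?E) \<le> (2 * exp ((l * f [])^2/2)) * (2^m * ?E)"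
    by (intro mult_right_mono cosh_bound) auto
  have 3: "2 * exp ((l * f [])^2/2) * (2^m * ?E) \<le> 2 * exp (l^2*c^2/2) * (2^m * ?E)"
    using sq by (intro mult_right_mono mult_left_mono) auto
  have 4: "2 * exp (l^2*c^2/2) * (2^m * ?E) = 2^(Suc m) * exp (real (Suc m) * l^2 * c^2 / 2)"
  proof -
    have "l^2*c^2/2 + real m * l^2 * c^2 / 2 = real (Suc m) * l^2 * c^2 / 2"
      by (simp add: distrib_right add_divide_distrib)
    hence "exp (l^2*c^2/2) * ?E = exp (real (Suc m) * l^2 * c^2 / 2)"
      by (simp only: exp_add[symmetric])
    thus ?thesis by simp
  qed
  from 1 2 3 4 show ?case by linarith
qed


lemma psum_max:
  assumes fin: "finite D" and ne: "D \<noteq> {}" and bd: "\<And>d u. d \<in> D \<Longrightarrow> \<bar>d u\<bar> \<le> c" and l: "l > 0"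
  shows "psum m (\<lambda>b. Max ((\<lambda>d. Sm m d b) ` D)) \<le> 2^m * (ln (real (card D)) / l + real m * l * c^2 / 2)"
proof -
  define M where "M b = Max ((\<lambda>d. Sm m d b) ` D)" for b
  define E where "E = exp (real m * l^2 * c^2 / 2)"
  have pt: "exp (l * M b) \<le> (\<Sum>d\<in>D. exp (l * Sm m d b))" for b
  proof -
    have "M b \<in> (\<lambda>d. Sm m d b) ` D" unfolding M_def using fin ne by (intro Max_in) auto
    then obtain d0 where d0: "d0 \<in> D" "M b = Sm m d0 b" by auto
    have "exp (l * Sm m d0 b) \<le> (\<Sum>d\<in>D. exp (l * Sm m d b))"
      using fin d0(1) by (intro member_le_sum) auto
    thus ?thesis using d0 by simp
  qed
  have "psum m (\<lambda>b. exp (l * M b)) \<le> psum m (\<lambda>b. \<Sum>d\<in>D. exp (l * Sm m d b))"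
    by (rule psum_mono) (rule pt)
  also have "\<dots> = (\<Sum>d\<in>D. psum m (\<lambda>b. exp (l * Sm m d b)))" by (rule psum_sum)
  also have "\<dots> \<le> (\<Sum>d\<in>D. 2^m * E)"
    unfolding E_def by (intro sum_mono psum_exp_Sm) (use bd in auto)
  also have "\<dots> = real (card D) * 2^m * E" by simp
  finally have up: "psum m (\<lambda>b. exp (l * M b)) \<le> real (card D) * 2^m * E" .
  define a where "a = l * psum m M / 2^m"
  have tan: "exp a * (1 + l * M b - a) \<le> exp (l * M b)" for b
  proof -
    have "1 + (l * M b - a) \<le> exp (l * M b - a)" by (rule exp_ge_add_one_self)
    hence "exp a * (1 + (l * M b - a)) \<le> exp a * exp (l * M b - a)" by (intro mult_left_mono) auto
    also have "exp a * exp (l * M b - a) = exp (l * M b)" by (simp flip: exp_add)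
    finally show ?thesis by (simp add: add_diff_eq)
  qed
  have "psum m (\<lambda>b. exp a * (1 + l * M b - a)) \<le> psum m (\<lambda>b. exp (l * M b))"
    by (rule psum_mono) (rule tan)
  moreover have "psum m (\<lambda>b. exp a * (1 + l * M b - a)) = exp a * 2^m"
  proof -
    have f: "(\<lambda>b. exp a * (1 + l * M b - a)) = (\<lambda>b. exp a * (1 - a) + (exp a * l) * M b)"
      by (rule ext) (simp add: algebra_simps)
    have "psum m (\<lambda>b. exp a * (1 + l * M b - a)) = 2^m * (exp a * (1 - a)) + (exp a * l) * psum m M"
      unfolding f psum_add psum_const psum_cmult ..
    also have "\<dots> = exp a * (2^m * (1 - a) + l * psum m M)" by (simp add: algebra_simps)
    also have "\<dots> = exp a * 2^m" unfolding a_def by (simp add: field_simps)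
    finally show ?thesis .
  qed
  ultimately have "exp a * 2^m \<le> real (card D) * 2^m * E" using up by linarith
  hence "exp a \<le> real (card D) * E" by simp
  moreover have cD: "real (card D) > 0" using fin ne by (simp add: card_gt_0_iff)
  ultimately have "ln (exp a) \<le> ln (real (card D) * E)"
    by (subst ln_le_cancel_iff) (auto simp: E_def)
  hence "a \<le> ln (real (card D)) + real m * l^2 * c^2 / 2"
    using cD by (simp add: ln_mult E_def)
  hence "l * psum m M \<le> 2^m * (ln (real (card D)) + real m * l^2 * c^2 / 2)"
    unfolding a_def by (simp add: field_simps)
  hence "psum m M \<le> 2^m * (ln (real (card D)) + real m * l^2 * c^2 / 2) / l"
    using l by (simp add: field_simps)
  also have "\<dots> = 2^m * (ln (real (card D)) / l + real m * l * c^2 / 2)"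
    using l by (simp add: field_simps power2_eq_square)
  finally show ?thesis unfolding M_def .
qed


definition relu :: "real \<Rightarrow> real" where "relu z = max 0 z"

lemma relu_diff: "relu a - relu b > e \<Longrightarrow> e \<ge> 0 \<Longrightarrow> a - b > e"
  unfolding relu_def by (auto simp: max_def split: if_splits)

lemma relu_lip: "\<bar>relu a - relu b\<bar> \<le> \<bar>a - b\<bar>"
  unfolding relu_def by (auto simp: max_def)

definition cnt :: "(nat \<times> bool) list \<Rightarrow> nat \<Rightarrow> bool \<Rightarrow> nat" where
  "cnt hs t c = length (filter (\<lambda>p. p = (t, c)) hs)"

definition coef :: "(nat \<times> bool) list \<Rightarrow> nat \<Rightarrow> real" where
  "coef hs t = real (cnt hs t True) - real (cnt hs t False)"

fun Wt :: "real \<Rightarrow> (nat \<times> bool) list \<Rightarrow> (bool list \<Rightarrow> nat \<Rightarrow> real) \<Rightarrow> bool list \<Rightarrow> nat \<Rightarrow> nat \<Rightarrow> real" where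
  "Wt \<beta> hs X b 0 = (\<lambda>i. 0)"
| "Wt \<beta> hs X b (Suc t) = (\<lambda>i. Wt \<beta> hs X b t i + \<beta> * coef hs t * X (take t b) i)"

definition cv :: "real \<Rightarrow> (nat \<times> bool) list \<Rightarrow> (bool list \<Rightarrow> nat \<Rightarrow> real) \<Rightarrow> nat \<Rightarrow> bool list \<Rightarrow> real" where
  "cv \<beta> hs X d u = relu (dotd d (Wt \<beta> hs X u (Suc (length u))) (X u))"

lemma Wt_take: "s \<le> Suc t \<Longrightarrow> Wt \<beta> hs X b s = Wt \<beta> hs X (take t b) s"
proof (induction s)
  case 0 then show ?case by simp
next
  case (Suc s)
  hence "s \<le> t" by simp
  hence "take s (take t b) = take s b" by (simp add: min_def)
  with Suc show ?case by simp
qed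

lemma cv_take: "t \<le> length b \<Longrightarrow> cv \<beta> hs X d (take t b) = relu (dotd d (Wt \<beta> hs X b (Suc t)) (X (take t b)))"
  unfolding cv_def using Wt_take[of "Suc t" t \<beta> hs X b] by (simp add: min_def)

lemma Wt_cong: "(\<And>s. s < t \<Longrightarrow> coef hs1 s = coef hs2 s) \<Longrightarrow> Wt \<beta> hs1 X b t = Wt \<beta> hs2 X b t"
  by (induction t) auto

lemma cnt_append: "cnt (xs @ ys) t c = cnt xs t c + cnt ys t c"
  unfolding cnt_def by simp

lemma cnt_notin: "(\<And>p. p \<in> set hs \<Longrightarrow> fst p \<noteq> t) \<Longrightarrow> cnt hs t c = 0"
  unfolding cnt_def by (force simp: filter_empty_conv)

lemma coef_notin: "(\<And>p. p \<in> set hs \<Longrightarrow> fst p \<noteq> t) \<Longrightarrow> coef hs t = 0"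
  unfolding coef_def using cnt_notin by simp

lemma coef_append: "coef (xs @ ys) t = coef xs t + coef ys t"
  unfolding coef_def cnt_append by simp

lemma coef_single: "coef [(t, c)] s = (if s = t then (if c then 1 else -1) else 0)"
  unfolding coef_def cnt_def by auto

lemma dotd_expand:
  "dotd d (\<lambda>i. V i + s * x i - w i) (\<lambda>i. V i + s * x i - w i) =
   dotd d (\<lambda>i. V i - w i) (\<lambda>i. V i - w i) + 2 * s * (dotd d V x - dotd d w x) + s^2 * dotd d x x"
  unfolding dotd_def by (simp add: power2_eq_square algebra_simps sum.distrib sum_distrib_left sum_subtractf)

lemma dotd_nonneg_sq: "dotd d (\<lambda>i. V i) (\<lambda>i. V i) \<ge> 0"
  unfolding dotd_def by (intro sum_nonneg) auto


lemma step_single: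
  "Wt \<beta> (hs @ [(t,c)]) X b (Suc t) = (\<lambda>i. Wt \<beta> hs X b (Suc t) i + (if c then \<beta> else -\<beta>) * X (take t b) i)"
proof -
  have "Wt \<beta> (hs @ [(t,c)]) X b t = Wt \<beta> hs X b t"
    by (rule Wt_cong) (simp add: coef_append coef_single)
  thus ?thesis by (auto simp: coef_append coef_single algebra_simps)
qed

definition Pot :: "nat \<Rightarrow> (nat \<Rightarrow> real) \<Rightarrow> (nat \<Rightarrow> real) \<Rightarrow> real" where
  "Pot d w V = dotd d (\<lambda>i. V i - w i) (\<lambda>i. V i - w i)"

lemma Pot_nonneg: "Pot d w V \<ge> 0"
  unfolding Pot_def dotd_def by (intro sum_nonneg) auto

lemma inner:
  assumes bpos: "\<beta> > 0" and xx: "dotd d (X (take t b)) (X (take t b)) \<le> 1"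
  shows "Pot d w (Wt \<beta> hs X b (Suc t)) < real N * \<beta>^2 \<Longrightarrow>
    \<exists>ext. set ext \<subseteq> {t} \<times> UNIV \<and>
      real (length ext) * \<beta>^2 + Pot d w (Wt \<beta> (hs @ ext) X b (Suc t)) \<le> Pot d w (Wt \<beta> hs X b (Suc t)) \<and>
      \<bar>relu (dotd d (Wt \<beta> (hs @ ext) X b (Suc t)) (X (take t b))) - relu (dotd d w (X (take t b)))\<bar> \<le> \<beta>"
proof (induction N arbitrary: hs)
  case 0
  then show ?case using Pot_nonneg[of d w] by (metis not_le mult_zero_left of_nat_0)
next
  case (Suc N)
  define x where "x = X (take t b)"
  define V where "V = Wt \<beta> hs X b (Suc t)"
  show ?case
  proof (cases "\<bar>relu (dotd d V x) - relu (dotd d w x)\<bar> \<le> \<beta>")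
    case True
    then show ?thesis by (intro exI[of _ "[]"]) (simp add: V_def x_def)
  next
    case False
    have "\<exists>c. Pot d w (Wt \<beta> (hs @ [(t,c)]) X b (Suc t)) + \<beta>^2 \<le> Pot d w V"
    proof (cases "relu (dotd d V x) - relu (dotd d w x) > \<beta>")
      case True
      hence g: "dotd d V x - dotd d w x > \<beta>" using relu_diff bpos by force
      have "Pot d w (Wt \<beta> (hs @ [(t,False)]) X b (Suc t)) =
          Pot d w V + 2 * (-\<beta>) * (dotd d V x - dotd d w x) + (-\<beta>)^2 * dotd d x x"
        unfolding step_single Pot_def V_def x_def
        using dotd_expand[of d "Wt \<beta> hs X b (Suc t)" "-\<beta>" "X (take t b)" w] by simp
      also have "\<dots> \<le> Pot d w V - 2 * \<beta> * \<beta> + \<beta>^2 * 1"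
      proof -
        have "2 * \<beta> * \<beta> \<le> 2 * \<beta> * (dotd d V x - dotd d w x)" using g bpos by simp
        moreover have "\<beta>^2 * dotd d x x \<le> \<beta>^2 * 1" using xx unfolding x_def by (intro mult_left_mono) auto
        ultimately show ?thesis by simp
      qed
      finally show ?thesis by (intro exI[of _ False]) (simp add: power2_eq_square)
    next
      case False': False
      hence "relu (dotd d w x) - relu (dotd d V x) > \<beta>" using False by linarith
      hence g: "dotd d w x - dotd d V x > \<beta>" using relu_diff bpos by force
      have "Pot d w (Wt \<beta> (hs @ [(t,True)]) X b (Suc t)) =
          Pot d w V + 2 * \<beta> * (dotd d V x - dotd d w x) + \<beta>^2 * dotd d x x"
        unfolding step_single Pot_def V_def x_def
        using dotd_expand[of d "Wt \<beta> hs X b (Suc t)" "\<beta>" "X (take t b)" w] by simp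
      also have "\<dots> \<le> Pot d w V - 2 * \<beta> * \<beta> + \<beta>^2 * 1"
      proof -
        have "2 * \<beta> * \<beta> \<le> 2 * \<beta> * (dotd d w x - dotd d V x)" using g bpos by simp
        moreover have "\<beta>^2 * dotd d x x \<le> \<beta>^2 * 1" using xx unfolding x_def by (intro mult_left_mono) auto
        ultimately show ?thesis by (simp add: algebra_simps)
      qed
      finally show ?thesis by (intro exI[of _ True]) (simp add: power2_eq_square)
    qed
    then obtain c where c: "Pot d w (Wt \<beta> (hs @ [(t,c)]) X b (Suc t)) + \<beta>^2 \<le> Pot d w V" by blast
    have "Pot d w (Wt \<beta> (hs @ [(t,c)]) X b (Suc t)) < real N * \<beta>^2"
      using c Suc.prems unfolding V_def by (simp add: algebra_simps)
    from Suc.IH[OF this] obtain ext where ext: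
      "set ext \<subseteq> {t} \<times> UNIV"
      "real (length ext) * \<beta>^2 + Pot d w (Wt \<beta> ((hs @ [(t,c)]) @ ext) X b (Suc t)) \<le> Pot d w (Wt \<beta> (hs @ [(t,c)]) X b (Suc t))"
      "\<bar>relu (dotd d (Wt \<beta> ((hs @ [(t,c)]) @ ext) X b (Suc t)) (X (take t b))) - relu (dotd d w (X (take t b)))\<bar> \<le> \<beta>"
      by blast
    show ?thesis
    proof (intro exI[of _ "(t,c) # ext"] conjI)
      show "set ((t, c) # ext) \<subseteq> {t} \<times> UNIV" using ext(1) by auto
      show "real (length ((t, c) # ext)) * \<beta>^2 + Pot d w (Wt \<beta> (hs @ (t, c) # ext) X b (Suc t)) \<le> Pot d w (Wt \<beta> hs X b (Suc t))"
        using ext(2) c unfolding V_def by (simp add: algebra_simps)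
      show "\<bar>relu (dotd d (Wt \<beta> (hs @ (t, c) # ext) X b (Suc t)) (X (take t b))) - relu (dotd d w (X (take t b)))\<bar> \<le> \<beta>"
        using ext(3) by simp
    qed
  qed
qed


lemma greedy:
  assumes bpos: "\<beta> > 0" and xx: "\<And>t. t < m \<Longrightarrow> dotd d (X (take t b)) (X (take t b)) \<le> 1"
  shows "t \<le> m \<Longrightarrow> \<exists>hs. set hs \<subseteq> {..<t} \<times> UNIV \<and>
     real (length hs) * \<beta>^2 + Pot d w (Wt \<beta> hs X b t) \<le> dotd d w w \<and>
     (\<forall>s<t. \<bar>relu (dotd d (Wt \<beta> hs X b (Suc s)) (X (take s b))) - relu (dotd d w (X (take s b)))\<bar> \<le> \<beta>)"
proof (induction t)
  case 0
  have "Pot d w (Wt \<beta> [] X b 0) = dotd d w w" unfolding Pot_def dotd_def by simp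
  then show ?case by (intro exI[of _ "[]"]) simp
next
  case (Suc t)
  then obtain hs where hs: "set hs \<subseteq> {..<t} \<times> UNIV"
     "real (length hs) * \<beta>^2 + Pot d w (Wt \<beta> hs X b t) \<le> dotd d w w"
     "\<forall>s<t. \<bar>relu (dotd d (Wt \<beta> hs X b (Suc s)) (X (take s b))) - relu (dotd d w (X (take s b)))\<bar> \<le> \<beta>"
    by auto
  have c0: "coef hs t = 0" by (rule coef_notin) (use hs(1) in auto)
  have WS: "Wt \<beta> hs X b (Suc t) = Wt \<beta> hs X b t" using c0 by auto
  obtain N where N: "Pot d w (Wt \<beta> hs X b (Suc t)) / \<beta>^2 < real N" using reals_Archimedean2 by blast
  hence N': "Pot d w (Wt \<beta> hs X b (Suc t)) < real N * \<beta>^2" using bpos by (simp add: field_simps)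
  have "t < m" using Suc.prems by simp
  from inner[OF bpos xx[OF this] N'] obtain ext where ext:
    "set ext \<subseteq> {t} \<times> UNIV"
    "real (length ext) * \<beta>^2 + Pot d w (Wt \<beta> (hs @ ext) X b (Suc t)) \<le> Pot d w (Wt \<beta> hs X b (Suc t))"
    "\<bar>relu (dotd d (Wt \<beta> (hs @ ext) X b (Suc t)) (X (take t b))) - relu (dotd d w (X (take t b)))\<bar> \<le> \<beta>"
    by blast
  have same: "Wt \<beta> (hs @ ext) X b (Suc s) = Wt \<beta> hs X b (Suc s)" if "s < t" for s
  proof (rule Wt_cong)
    fix s' assume "s' < Suc s"
    hence "coef ext s' = 0" using that ext(1) by (intro coef_notin) auto
    thus "coef (hs @ ext) s' = coef hs s'" by (simp add: coef_append)
  qed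
  show ?case
  proof (intro exI[of _ "hs @ ext"] conjI allI impI)
    show "set (hs @ ext) \<subseteq> {..<Suc t} \<times> UNIV" using hs(1) ext(1) by auto
    show "real (length (hs @ ext)) * \<beta>^2 + Pot d w (Wt \<beta> (hs @ ext) X b (Suc t)) \<le> dotd d w w"
      using hs(2) ext(2) WS by (simp add: algebra_simps)
    fix s assume "s < Suc t"
    then consider "s < t" | "s = t" by linarith
    then show "\<bar>relu (dotd d (Wt \<beta> (hs @ ext) X b (Suc s)) (X (take s b))) - relu (dotd d w (X (take s b)))\<bar> \<le> \<beta>"
    proof cases
      case 1 then show ?thesis using same[OF 1] hs(3) by simp
    next
      case 2 then show ?thesis using ext(3) by simp
    qed
  qed
qed

lemma cover_exists:
  assumes bpos: "\<beta> > 0" and len: "length b = m"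
    and xx: "\<And>t. t < m \<Longrightarrow> dotd d (X (take t b)) (X (take t b)) \<le> 1"
    and ww: "dotd d w w \<le> 1"
  shows "\<exists>hs. set hs \<subseteq> {..<m} \<times> UNIV \<and> real (length hs) * \<beta>^2 \<le> 1 \<and>
     (\<forall>t<m. \<bar>cv \<beta> hs X d (take t b) - relu (dotd d w (X (take t b)))\<bar> \<le> \<beta>)"
proof -
  from greedy[of \<beta> m d X b m w, OF bpos xx] obtain hs where hs:
    "set hs \<subseteq> {..<m} \<times> UNIV"
    "real (length hs) * \<beta>^2 + Pot d w (Wt \<beta> hs X b m) \<le> dotd d w w"
    "\<forall>s<m. \<bar>relu (dotd d (Wt \<beta> hs X b (Suc s)) (X (take s b))) - relu (dotd d w (X (take s b)))\<bar> \<le> \<beta>"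
    by auto
  show ?thesis
  proof (intro exI[of _ hs] conjI allI impI)
    show "set hs \<subseteq> {..<m} \<times> UNIV" by fact
    show "real (length hs) * \<beta>^2 \<le> 1" using hs(2) ww Pot_nonneg[of d w "Wt \<beta> hs X b m"] by linarith
    fix t assume "t < m"
    thus "\<bar>cv \<beta> hs X d (take t b) - relu (dotd d w (X (take t b)))\<bar> \<le> \<beta>"
      using hs(3) cv_take[of t b] len by simp
  qed
qed


definition Lh :: "nat \<Rightarrow> nat \<Rightarrow> (nat \<times> bool) list set" where
  "Lh m M = {hs. set hs \<subseteq> {..<m} \<times> UNIV \<and> length hs \<le> M}"

lemma geom_le: "(\<Sum>i\<le>M. (a::nat)^i) \<le> (a+1)^M"
proof (induction M)
  case 0 then show ?case by simp
next
  case (Suc M)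
  have "(\<Sum>i\<le>Suc M. a^i) = 1 + a * (\<Sum>i\<le>M. a^i)"
    unfolding sum.atMost_Suc_shift power_Suc sum_distrib_left by simp
  also have "\<dots> \<le> 1 + a * (a+1)^M" using Suc by simp
  also have "\<dots> \<le> (a+1)^Suc M"
  proof -
    have "1 \<le> (a+1)^M" by simp
    thus ?thesis by (simp add: algebra_simps)
  qed
  finally show ?case .
qed

lemma Lh_finite: "finite (Lh m M)"
  unfolding Lh_def by (rule finite_lists_length_le) auto

lemma Lh_card: "card (Lh m M) \<le> (2*m+1)^M"
proof -
  have "card (Lh m M) = (\<Sum>i\<le>M. card ({..<m} \<times> (UNIV::bool set))^i)"
    unfolding Lh_def by (rule card_lists_length_le) auto
  also have "card ({..<m} \<times> (UNIV::bool set)) = 2*m" by (simp add: card_cartesian_product)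
  finally show ?thesis using geom_le[where a="2*m" and M=M] by simp
qed

definition clampr :: "real \<Rightarrow> real \<Rightarrow> real" where "clampr c z = max (-c) (min c z)"

lemma clamp_bd: "c \<ge> 0 \<Longrightarrow> \<bar>clampr c z\<bar> \<le> c"
  unfolding clampr_def by auto

lemma clamp_id: "\<bar>z\<bar> \<le> c \<Longrightarrow> clampr c z = z"
  unfolding clampr_def by auto

definition Dset :: "(bool list \<Rightarrow> nat \<Rightarrow> real) \<Rightarrow> nat \<Rightarrow> nat \<Rightarrow> nat \<Rightarrow> (bool list \<Rightarrow> real) set" where
  "Dset X d m j = (\<lambda>(hs, hs', \<sigma>). (\<lambda>u. \<sigma> * clampr (3 / 2^j) (cv (1/2^j) hs X d u - cv (1/2^(j-1)) hs' X d u)))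
     ` (Lh m (4^j) \<times> Lh m (4^(j-1)) \<times> {1, -1})"

lemma Dset_finite: "finite (Dset X d m j)"
  unfolding Dset_def using Lh_finite by auto

lemma Dset_ne: "Dset X d m j \<noteq> {}"
proof -
  have "[] \<in> Lh m M" for M unfolding Lh_def by simp
  thus ?thesis unfolding Dset_def by blast
qed

lemma Dset_card: "real (card (Dset X d m j)) \<le> 2 * (2*m+1)^(4^j) * (2*m+1)^(4^(j-1))"
proof -
  have "card (Dset X d m j) \<le> card (Lh m (4^j) \<times> Lh m (4^(j-1)) \<times> {1::real, -1})"
    unfolding Dset_def by (rule card_image_le) (use Lh_finite in auto)
  also have "\<dots> = card (Lh m (4^j)) * (card (Lh m (4^(j-1))) * 2)"
    by (simp add: card_cartesian_product)
  also have "\<dots> \<le> (2*m+1)^(4^j) * ((2*m+1)^(4^(j-1)) * 2)"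
    by (intro mult_mono Lh_card) auto
  finally have "card (Dset X d m j) \<le> (2*m+1)^(4^j) * ((2*m+1)^(4^(j-1)) * 2)" .
  hence "real (card (Dset X d m j)) \<le> real ((2*m+1)^(4^j) * ((2*m+1)^(4^(j-1)) * 2))"
    by (simp only: of_nat_le_iff)
  thus ?thesis by (simp add: algebra_simps)
qed

lemma Dset_bd: "D \<in> Dset X d m j \<Longrightarrow> \<bar>D u\<bar> \<le> 3 / 2^j"
  unfolding Dset_def by (auto simp: abs_mult intro!: clamp_bd)

lemma Dset_mem: "hs \<in> Lh m (4^j) \<Longrightarrow> hs' \<in> Lh m (4^(j-1)) \<Longrightarrow> \<sigma> \<in> {1,-1} \<Longrightarrow>
   (\<lambda>u. \<sigma> * clampr (3 / 2^j) (cv (1/2^j) hs X d u - cv (1/2^(j-1)) hs' X d u)) \<in> Dset X d m j"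
  unfolding Dset_def by (rule image_eqI[of _ _ "(hs, hs', \<sigma>)"]) auto


lemma Sm_cong: "(\<And>t. t < m \<Longrightarrow> f (take t b) = g (take t b)) \<Longrightarrow> Sm m f b = Sm m g b"
  unfolding Sm_def by (intro sum.cong) auto

lemma Sm_abs_le: "(\<And>t. t < m \<Longrightarrow> \<bar>f (take t b)\<bar> \<le> e) \<Longrightarrow> \<bar>Sm m f b\<bar> \<le> real m * e"
proof -
  assume a: "\<And>t. t < m \<Longrightarrow> \<bar>f (take t b)\<bar> \<le> e"
  have "\<bar>Sm m f b\<bar> \<le> (\<Sum>t<m. \<bar>sg (b ! t) * f (take t b)\<bar>)" unfolding Sm_def by (rule sum_abs)
  also have "\<dots> \<le> (\<Sum>t<m. e)" by (intro sum_mono) (use a in \<open>auto simp: sg_def abs_mult\<close>)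
  finally show ?thesis by simp
qed

lemma Wt_nil: "Wt \<beta> [] X b t = (\<lambda>i. 0)"
  by (induction t) (auto simp: coef_def cnt_def)

lemma cv_nil: "cv \<beta> [] X d u = 0"
  unfolding cv_def Wt_nil dotd_def relu_def by simp

lemma dot_le: "dotd d w x \<le> (dotd d w w + dotd d x x) / 2"
proof -
  have "dotd d w x \<le> (\<Sum>i<d. (w i * w i + x i * x i) / 2)"
    unfolding dotd_def
  proof (intro sum_mono)
    fix i
    have "0 \<le> (w i - x i)^2" by simp
    thus "w i * x i \<le> (w i * w i + x i * x i) / 2" by (simp add: power2_eq_square algebra_simps)
  qed
  also have "\<dots> = (dotd d w w + dotd d x x) / 2"
    unfolding dotd_def by (simp add: sum.distrib add_divide_distrib flip: sum_divide_distrib)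
  finally show ?thesis .
qed

lemma chain:
  assumes len: "length b = m"
    and xx: "\<And>t. t < m \<Longrightarrow> dotd d (X (take t b)) (X (take t b)) \<le> 1"
    and ww: "dotd d w w \<le> 1"
  shows "\<bar>Sm m (\<lambda>u. relu (dotd d w (X u))) b\<bar> \<le>
     real m / 2^J + (\<Sum>j<J. Max ((\<lambda>D. Sm m D b) ` Dset X d m (Suc j)))"
proof -
  define f where "f u = relu (dotd d w (X u))" for u
  define P where "P j hs \<longleftrightarrow> hs \<in> Lh m (4^j) \<and> (\<forall>t<m. \<bar>cv (1/2^j) hs X d (take t b) - f (take t b)\<bar> \<le> 1/2^j)" for j hs
  define H where "H j = (if j = 0 then [] else (SOME hs. P j hs))" for j
  have PH: "P j (H j)" for j
  proof (cases "j = 0")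
    case True
    have "\<bar>cv 1 [] X d (take t b) - f (take t b)\<bar> \<le> 1" if "t < m" for t
    proof -
      have "(dotd d w w + dotd d (X (take t b)) (X (take t b))) / 2 \<le> (1 + 1) / 2"
        using ww xx[OF that] by (intro divide_right_mono add_mono) auto
      hence "dotd d w (X (take t b)) \<le> 1" using dot_le[of d w "X (take t b)"] by simp
      thus ?thesis unfolding cv_nil f_def relu_def by simp
    qed
    thus ?thesis using True unfolding P_def H_def Lh_def by simp
  next
    case False
    have "(1::real)/2^j > 0" by simp
    from cover_exists[of "1/2^j" b m d X w, OF this len xx ww] obtain hs where hs:
      "set hs \<subseteq> {..<m} \<times> UNIV" "real (length hs) * (1/2^j)^2 \<le> 1"
      "\<forall>t<m. \<bar>cv (1/2^j) hs X d (take t b) - relu (dotd d w (X (take t b)))\<bar> \<le> 1/2^j" by blast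
    have "real (length hs) \<le> 4^j"
    proof -
      have "(1/(2::real)^j)^2 = 1/4^j" by (simp add: power_divide power_mult_distrib flip: power_mult) (simp add: power_mult[symmetric] mult.commute[of j 2] power_mult)
      hence "real (length hs) / 4^j \<le> 1" using hs(2) by simp
      thus ?thesis by (simp add: field_simps)
    qed
    hence "length hs \<le> 4^j" by (metis of_nat_le_iff of_nat_numeral of_nat_power)
    hence "P j hs" unfolding P_def Lh_def f_def using hs by auto
    hence "P j (SOME hs. P j hs)" by (rule someI)
    thus ?thesis using False unfolding H_def by simp
  qed
  define v where "v j u = cv (1/2^j) (H j) X d u" for j u
  have v0: "v 0 u = 0" for u unfolding v_def H_def by (simp add: cv_nil)
  have ident: "f u = (f u - v J u) + (\<Sum>j<J. v (Suc j) u - v j u)" for u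
    using sum_lessThan_telescope[of "\<lambda>j. v j u" J] v0[of u] by simp
  have "Sm m f b = Sm m (\<lambda>u. f u - v J u) b + (\<Sum>j<J. Sm m (\<lambda>u. v (Suc j) u - v j u) b)"
  proof -
    have "Sm m f b = Sm m (\<lambda>u. (f u - v J u) + (\<Sum>j<J. v (Suc j) u - v j u)) b"
      by (subst ident[symmetric]) (rule refl)
    also have "\<dots> = Sm m (\<lambda>u. f u - v J u) b + Sm m (\<lambda>u. \<Sum>j<J. v (Suc j) u - v j u) b"
      by (rule Sm_lin)
    also have "Sm m (\<lambda>u. \<Sum>j<J. v (Suc j) u - v j u) b = (\<Sum>j<J. Sm m (\<lambda>u. v (Suc j) u - v j u) b)"
      by (rule Sm_sum)
    finally show ?thesis .
  qed
  moreover have "\<bar>Sm m (\<lambda>u. f u - v J u) b\<bar> \<le> real m / 2^J"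
  proof -
    have "\<bar>Sm m (\<lambda>u. f u - v J u) b\<bar> \<le> real m * (1/2^J)"
      by (rule Sm_abs_le) (use PH[of J] in \<open>auto simp: P_def v_def abs_minus_commute\<close>)
    thus ?thesis by simp
  qed
  moreover have maxb: "\<bar>Sm m (\<lambda>u. v (Suc j) u - v j u) b\<bar> \<le> Max ((\<lambda>D. Sm m D b) ` Dset X d m (Suc j))" for j
  proof -
    define g where "g u = v (Suc j) u - v j u" for u
    have close: "\<bar>g (take t b)\<bar> \<le> 3 / 2^(Suc j)" if "t < m" for t
    proof -
      have "\<bar>v (Suc j) (take t b) - f (take t b)\<bar> \<le> 1/2^(Suc j)" using PH[of "Suc j"] that by (auto simp: P_def v_def)
      moreover have "\<bar>v j (take t b) - f (take t b)\<bar> \<le> 1/2^j" using PH[of j] that by (auto simp: P_def v_def)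
      moreover have "(1::real)/2^j = 2/2^(Suc j)" by simp
      ultimately show ?thesis unfolding g_def by linarith
    qed
    have mem: "(\<lambda>u. \<sigma> * clampr (3 / 2^(Suc j)) (g u)) \<in> Dset X d m (Suc j)" if "\<sigma> \<in> {1,-1}" for \<sigma>
    proof -
      have "(\<lambda>u. \<sigma> * clampr (3 / 2^(Suc j)) (cv (1/2^(Suc j)) (H (Suc j)) X d u - cv (1/2^(Suc j - 1)) (H j) X d u)) \<in> Dset X d m (Suc j)"
        by (rule Dset_mem) (use PH[of "Suc j"] PH[of j] that in \<open>auto simp: P_def\<close>)
      thus ?thesis unfolding g_def v_def by simp
    qed
    have fin: "finite ((\<lambda>D. Sm m D b) ` Dset X d m (Suc j))" using Dset_finite by auto
    have e1: "Sm m (\<lambda>u. 1 * clampr (3 / 2^(Suc j)) (g u)) b = Sm m g b"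
      by (rule Sm_cong) (use close in \<open>auto intro: clamp_id\<close>)
    have e2: "Sm m (\<lambda>u. (-1) * clampr (3 / 2^(Suc j)) (g u)) b = - Sm m g b"
    proof -
      have "Sm m (\<lambda>u. (-1) * clampr (3 / 2^(Suc j)) (g u)) b = Sm m (\<lambda>u. (-1) * g u) b"
        by (rule Sm_cong) (use close in \<open>auto intro: clamp_id\<close>)
      thus ?thesis by (simp add: Sm_cmult[of m "-1" g b, simplified])
    qed
    have i1: "Sm m g b \<in> (\<lambda>D. Sm m D b) ` Dset X d m (Suc j)"
      using mem[of 1] e1 by (intro image_eqI[where x="\<lambda>u. 1 * clampr (3 / 2^(Suc j)) (g u)"]) auto
    have i2: "- Sm m g b \<in> (\<lambda>D. Sm m D b) ` Dset X d m (Suc j)"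
      using mem[of "-1"] e2 by (intro image_eqI[where x="\<lambda>u. (-1) * clampr (3 / 2^(Suc j)) (g u)"]) auto
    have "Sm m g b \<le> Max ((\<lambda>D. Sm m D b) ` Dset X d m (Suc j))"
      by (rule Max_ge[OF fin i1])
    moreover have "- Sm m g b \<le> Max ((\<lambda>D. Sm m D b) ` Dset X d m (Suc j))"
      by (rule Max_ge[OF fin i2])
    ultimately show ?thesis unfolding g_def by linarith
  qed
  ultimately have "\<bar>Sm m f b\<bar> \<le> real m / 2^J + (\<Sum>j<J. \<bar>Sm m (\<lambda>u. v (Suc j) u - v j u) b\<bar>)"
  proof -
    assume eq: "Sm m f b = Sm m (\<lambda>u. f u - v J u) b + (\<Sum>j<J. Sm m (\<lambda>u. v (Suc j) u - v j u) b)"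
      and a1: "\<bar>Sm m (\<lambda>u. f u - v J u) b\<bar> \<le> real m / 2^J"
    have "\<bar>Sm m f b\<bar> \<le> \<bar>Sm m (\<lambda>u. f u - v J u) b\<bar> + \<bar>\<Sum>j<J. Sm m (\<lambda>u. v (Suc j) u - v j u) b\<bar>"
      unfolding eq by (rule abs_triangle_ineq)
    moreover have "\<bar>\<Sum>j<J. Sm m (\<lambda>u. v (Suc j) u - v j u) b\<bar> \<le> (\<Sum>j<J. \<bar>Sm m (\<lambda>u. v (Suc j) u - v j u) b\<bar>)"
      by (rule sum_abs)
    ultimately show ?thesis using a1 by linarith
  qed
  also have "\<dots> \<le> real m / 2^J + (\<Sum>j<J. Max ((\<lambda>D. Sm m D b) ` Dset X d m (Suc j)))"
    by (intro add_left_mono sum_mono) (rule maxb)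
  finally show ?thesis unfolding f_def .
qed


lemma level_bound:
  assumes m1: "m \<ge> 1"
  shows "psum m (\<lambda>b. Max ((\<lambda>D. Sm m D b) ` Dset X d m n)) \<le> 2^m * (15/2 * sqrt (ln (2 * real m + 1) * real m))"
proof -
  define ll where "ll = ln (2 * real m + 1)"
  define q where "q = sqrt (ll * real m)"
  define K where "K = (4::real)^n"
  have Kpos: "K \<ge> 1" unfolding K_def by simp
  have l1: "ll \<ge> 1"
  proof -
    have "exp 1 \<le> 2 * real m + 1" using exp_le m1 by simp
    hence "ln (exp 1) \<le> ln (2 * real m + 1)" by (subst ln_le_cancel_iff) auto
    thus ?thesis unfolding ll_def by simp
  qed
  have qpos: "q > 0" unfolding q_def using l1 m1 by simp
  have qq: "q * q = ll * real m" unfolding q_def using l1 by simp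
  define l where "l = K * q / real m"
  have lpos: "l > 0" unfolding l_def using qpos m1 Kpos by simp
  have cardpos: "real (card (Dset X d m n)) > 0"
    using Dset_finite Dset_ne by (simp add: card_gt_0_iff)
  have lncard: "ln (real (card (Dset X d m n))) \<le> 3 * K * ll"
  proof -
    have "ln (real (card (Dset X d m n))) \<le> ln (2 * (2*real m+1)^(4^n) * (2*real m+1)^(4^(n-1)))"
    proof -
      have e: "real (Suc (2 * m) ^ a) = (2 * real m + 1) ^ a" for a by (simp add: add.commute)
      have "real (card (Dset X d m n)) \<le> 2 * (2*real m+1)^(4^n) * (2*real m+1)^(4^(n-1))"
        using Dset_card[of X d m n] unfolding e by (simp add: add.commute)
      thus ?thesis using cardpos by (subst ln_le_cancel_iff) auto
    qed
    also have "\<dots> = ln 2 + real (4^n) * ll + real (4^(n-1)) * ll"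
      unfolding ll_def by (simp add: ln_mult ln_realpow)
    also have "\<dots> \<le> K * ll + K * ll + K * ll"
    proof -
      have "ln 2 \<le> ll" unfolding ll_def using m1 by simp
      moreover have "1 * ll \<le> K * ll" using Kpos l1 by (intro mult_right_mono) auto
      ultimately have "ln 2 \<le> K * ll" by simp
      moreover have "real (4^n) * ll = K * ll" unfolding K_def by simp
      moreover have "real (4^(n-1)) \<le> K" unfolding K_def by (simp add: power_increasing)
      hence "real (4^(n-1)) * ll \<le> K * ll" using l1 by (intro mult_right_mono) auto
      ultimately show ?thesis by linarith
    qed
    finally show ?thesis by simp
  qed
  have "psum m (\<lambda>b. Max ((\<lambda>D. Sm m D b) ` Dset X d m n)) \<le>
      2^m * (ln (real (card (Dset X d m n))) / l + real m * l * (3/2^n)^2 / 2)"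
    by (rule psum_max[where D="Dset X d m n" and c="3/2^n" and l=l and m=m]) (auto simp: Dset_finite Dset_ne Dset_bd lpos)
  also have "ln (real (card (Dset X d m n))) / l \<le> 3 * q"
  proof -
    have "ln (real (card (Dset X d m n))) / l \<le> 3 * K * ll / l"
      using lncard lpos by (intro divide_right_mono) auto
    also have "3 * K * ll / l = 3 * (ll * real m) / q"
      unfolding l_def using Kpos qpos m1 by (simp add: field_simps)
    also have "\<dots> = 3 * q" using qq qpos by (simp add: field_simps)
    finally show ?thesis .
  qed
  hence "2^m * (ln (real (card (Dset X d m n))) / l + real m * l * (3/2^n)^2 / 2) \<le>
         2^m * (3 * q + real m * l * (3/2^n)^2 / 2)" by simp
  also have "real m * l * (3/2^n)^2 / 2 = 9/2 * q"
  proof -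
    have "(3/(2::real)^n)^2 = 9 / K" unfolding K_def
      by (simp add: power_divide power_mult_distrib flip: power_mult) (simp add: power_mult[symmetric] mult.commute[of n 2] power_mult)
    thus ?thesis unfolding l_def using m1 Kpos by (simp add: field_simps)
  qed
  finally show ?thesis unfolding q_def ll_def by simp
qed


lemma clip_le1: "clip z \<le> 1" and clip_ge: "clip z \<ge> -1"
  unfolding clip_def by auto

lemma clip_up: "clip g \<ge> s + a \<Longrightarrow> s - a \<ge> -1 \<Longrightarrow> a > 0 \<Longrightarrow> g \<ge> s + a"
  unfolding clip_def by (auto simp: max_def min_def split: if_splits)

lemma clip_down: "clip g \<le> s - a \<Longrightarrow> s + a \<le> 1 \<Longrightarrow> a > 0 \<Longrightarrow> g \<le> s - a"
  unfolding clip_def by (auto simp: max_def min_def split: if_splits)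

lemma s_bounds:
  assumes sh: "seq_shattered (Hkd k d) (Xdom d) \<alpha> m xt st" and u: "length u < m"
  shows "st u + \<alpha> \<le> 1" "st u - \<alpha> \<ge> -1"
proof -
  define n where "n = m - length u - 1"
  have mk: "\<exists>f\<in>Hkd k d. (c \<longrightarrow> f (xt u) \<ge> st u + \<alpha>) \<and> (\<not> c \<longrightarrow> f (xt u) \<le> st u - \<alpha>)" for c
  proof -
    define b where "b = u @ c # replicate n c"
    have lb: "length b = m" unfolding b_def n_def using u by simp
    have tb: "take (length u) b = u" unfolding b_def by simp
    have bb: "b ! length u = c" unfolding b_def by simp
    from sh lb obtain f where "f \<in> Hkd k d" and f: "\<forall>t<m.
        (b ! t \<longrightarrow> f (xt (take t b)) \<ge> st (take t b) + \<alpha>) \<and>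
        (\<not> b ! t \<longrightarrow> f (xt (take t b)) \<le> st (take t b) - \<alpha>)"
      unfolding seq_shattered_def by blast
    thus ?thesis using f[rule_format, OF u] tb bb by auto
  qed
  have cl: "f \<in> Hkd k d \<Longrightarrow> f x \<le> 1 \<and> f x \<ge> -1" for f x
    unfolding Hkd_def using clip_le1 clip_ge by auto
  from mk[of True] obtain f where "f \<in> Hkd k d" "f (xt u) \<ge> st u + \<alpha>" by auto
  with cl[of f "xt u"] show "st u + \<alpha> \<le> 1" by linarith
  from mk[of False] obtain g where "g \<in> Hkd k d" "g (xt u) \<le> st u - \<alpha>" by auto
  with cl[of g "xt u"] show "st u - \<alpha> \<ge> -1" by linarith
qed

definition Psi :: "(bool list \<Rightarrow> nat \<Rightarrow> real) \<Rightarrow> nat \<Rightarrow> nat \<Rightarrow> nat \<Rightarrow> bool list \<Rightarrow> real" where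
  "Psi X d m J b = real m / 2^J + (\<Sum>j<J. Max ((\<lambda>D. Sm m D b) ` Dset X d m (Suc j)))"

lemma pointwise:
  assumes sh: "seq_shattered (Hkd k d) (Xdom d) \<alpha> m xt st" and apos: "\<alpha> > 0"
    and lb: "length b = m"
  shows "real m * \<alpha> \<le> real k * Psi xt d m J b - Sm m st b"
proof -
  from sh lb obtain f where fH: "f \<in> Hkd k d" and f: "\<forall>t<m.
        (b ! t \<longrightarrow> f (xt (take t b)) \<ge> st (take t b) + \<alpha>) \<and>
        (\<not> b ! t \<longrightarrow> f (xt (take t b)) \<le> st (take t b) - \<alpha>)"
    unfolding seq_shattered_def by blast
  from fH obtain a w where fdef: "f = (\<lambda>x. clip (\<Sum>j<k. a j * max 0 (dotd d (w j) x)))"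
    and a: "\<forall>j<k. \<bar>a j\<bar> \<le> 1" and w: "\<forall>j<k. w j \<in> vecs d \<and> sqrt (dotd d (w j) (w j)) \<le> 1"
    unfolding Hkd_def by blast
  define G where "G u = (\<Sum>j<k. a j * relu (dotd d (w j) (xt u)))" for u
  have xin: "xt (take t b) \<in> Xdom d" if "t < m" for t
    using sh that lb unfolding seq_shattered_def by auto
  have xx: "dotd d (xt (take t b)) (xt (take t b)) \<le> 1" if "t < m" for t
    using xin[OF that] unfolding Xdom_def by auto
  have step: "\<alpha> \<le> sg (b ! t) * (G (take t b) - st (take t b))" if "t < m" for t
  proof -
    have ltb: "length (take t b) < m" using that lb by simp
    note sb = s_bounds[OF sh ltb]
    have fG: "f (xt (take t b)) = clip (G (take t b))" unfolding fdef G_def relu_def by simp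
    show ?thesis
    proof (cases "b ! t")
      case True
      hence "G (take t b) \<ge> st (take t b) + \<alpha>" using f that fG sb apos clip_up by metis
      thus ?thesis using True by (simp add: sg_def)
    next
      case False
      hence "G (take t b) \<le> st (take t b) - \<alpha>" using f that fG sb apos clip_down by metis
      thus ?thesis using False by (simp add: sg_def)
    qed
  qed
  have "real m * \<alpha> = (\<Sum>t<m. \<alpha>)" by simp
  also have "\<dots> \<le> (\<Sum>t<m. sg (b ! t) * (G (take t b) - st (take t b)))"
    by (intro sum_mono step) auto
  also have "\<dots> = Sm m G b - Sm m st b"
    unfolding Sm_def by (simp add: sum_subtractf right_diff_distrib)
  finally have 1: "real m * \<alpha> \<le> Sm m G b - Sm m st b" .
  have "Sm m G b = (\<Sum>j<k. a j * Sm m (\<lambda>u. relu (dotd d (w j) (xt u))) b)"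
    unfolding G_def Sm_sum Sm_cmult ..
  also have "\<dots> \<le> (\<Sum>j<k. Psi xt d m J b)"
  proof (intro sum_mono)
    fix j assume "j \<in> {..<k}"
    hence jk: "j < k" by simp
    have ww: "dotd d (w j) (w j) \<le> 1" using w jk by auto
    have c: "\<bar>Sm m (\<lambda>u. relu (dotd d (w j) (xt u))) b\<bar> \<le> Psi xt d m J b"
      unfolding Psi_def by (rule chain[of b m d xt "w j" J, OF lb xx ww])
    have "a j * Sm m (\<lambda>u. relu (dotd d (w j) (xt u))) b \<le> \<bar>a j\<bar> * \<bar>Sm m (\<lambda>u. relu (dotd d (w j) (xt u))) b\<bar>"
      by (metis abs_ge_self abs_mult)
    also have "\<dots> \<le> 1 * Psi xt d m J b"
      using a jk c by (intro mult_mono) auto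
    finally show "a j * Sm m (\<lambda>u. relu (dotd d (w j) (xt u))) b \<le> Psi xt d m J b" by simp
  qed
  also have "\<dots> = real k * Psi xt d m J b" by simp
  finally show ?thesis using 1 by linarith
qed


lemma averaged:
  assumes sh: "seq_shattered (Hkd k d) (Xdom d) \<alpha> m xt st" and apos: "\<alpha> > 0" and m1: "m \<ge> 1"
  shows "real m * \<alpha> \<le> real k * (real m / 2^J + real J * (15/2 * sqrt (ln (2 * real m + 1) * real m)))"
proof -
  define q where "q = 15/2 * sqrt (ln (2 * real m + 1) * real m)"
  have A: "psum m (\<lambda>b. real m * \<alpha>) \<le> psum m (\<lambda>b. real k * Psi xt d m J b - Sm m st b)"
    by (rule psum_mono) (rule pointwise[OF sh apos])
  have B: "psum m (\<lambda>b. real k * Psi xt d m J b - Sm m st b) = real k * psum m (Psi xt d m J)"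
    by (simp add: psum_diff psum_cmult psum_Sm_zero)
  have C: "psum m (Psi xt d m J) = 2^m * (real m / 2^J) + (\<Sum>j<J. psum m (\<lambda>b. Max ((\<lambda>D. Sm m D b) ` Dset xt d m (Suc j))))"
    unfolding Psi_def by (simp add: psum_add psum_const psum_sum)
  have D: "(\<Sum>j<J. psum m (\<lambda>b. Max ((\<lambda>D. Sm m D b) ` Dset xt d m (Suc j)))) \<le> (\<Sum>j<J. 2^m * q)"
    unfolding q_def by (intro sum_mono level_bound m1)
  have E: "psum m (Psi xt d m J) \<le> 2^m * (real m / 2^J + real J * q)"
    using C D by (simp add: algebra_simps)
  have "2^m * (real m * \<alpha>) \<le> real k * psum m (Psi xt d m J)"
    using A B by (simp add: psum_const)
  also have "\<dots> \<le> real k * (2^m * (real m / 2^J + real J * q))"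
    using E by (intro mult_left_mono) auto
  finally have "2^m * (real m * \<alpha>) \<le> 2^m * (real k * (real m / 2^J + real J * q))"
    by (simp add: algebra_simps)
  thus ?thesis unfolding q_def by simp
qed

lemma bound_m:
  assumes sh: "seq_shattered (Hkd k d) (Xdom d) \<alpha> m xt st" and apos: "\<alpha> > 0" and m1: "m \<ge> 1"
    and J: "2^J * \<alpha> \<ge> 2 * real k"
  shows "real m * \<alpha>^2 \<le> 225 * real k^2 * real J^2 * ln (2 * real m + 1)"
proof -
  define ll where "ll = ln (2 * real m + 1)"
  have llpos: "ll \<ge> 0" unfolding ll_def by simp
  have 1: "real m * \<alpha> \<le> real k * (real m / 2^J) + real k * real J * (15/2 * sqrt (ll * real m))"
    using averaged[OF sh apos m1, of J] unfolding ll_def by (simp add: algebra_simps)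
  have "real k * (real m / 2^J) = real m * (real k / 2^J)" by simp
  also have "\<dots> \<le> real m * (\<alpha> / 2)"
  proof -
    have "real k / 2^J \<le> \<alpha> / 2" using J by (simp add: field_simps)
    thus ?thesis by (intro mult_left_mono) auto
  qed
  finally have h: "real k * (real m / 2^J) \<le> real m * (\<alpha> / 2)" .
  have h2: "real k * (real m / 2^J) \<le> (real m * \<alpha>) / 2" using h by simp
  have "real m * \<alpha> / 2 \<le> real k * real J * (15/2 * sqrt (ll * real m))" using 1 h2 by linarith
  hence 2: "real m * \<alpha> \<le> 15 * real k * real J * sqrt (ll * real m)" by simp
  have "(real m * \<alpha>)^2 \<le> (15 * real k * real J * sqrt (ll * real m))^2"
    using 2 apos by (intro power_mono) auto
  also have "\<dots> = 225 * real k^2 * real J^2 * (ll * real m)"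
    using llpos by (simp add: power_mult_distrib)
  finally have "real m * (real m * \<alpha>^2) \<le> real m * (225 * real k^2 * real J^2 * ll)"
    by (simp add: power_mult_distrib power2_eq_square algebra_simps)
  thus ?thesis using m1 unfolding ll_def by simp
qed


lemma solve_log:
  fixes A x :: real
  assumes A1: "A \<ge> 1" and x0: "x \<ge> 0" and h: "x \<le> A * ln (2*x+1)"
  shows "x \<le> A * (ln 25 + 2 * ln A)"
proof -
  define y where "y = 2*x+1"
  have y1: "y \<ge> 1" unfolding y_def using x0 by simp
  have "ln (sqrt y) \<le> sqrt y - 1" using y1 by (intro ln_le_minus_one) auto
  hence ly: "ln y \<le> 2 * sqrt y" using y1 by (simp add: ln_sqrt)
  have 1: "x \<le> 2 * A * sqrt y"
  proof -
    have "A * ln y \<le> A * (2 * sqrt y)" using ly A1 by (intro mult_left_mono) auto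
    thus ?thesis using h unfolding y_def by simp
  qed
  have x12: "x \<le> 12 * A^2"
  proof (cases "x \<le> 1")
    case True
    have "1 \<le> A^2" using A1 by simp
    then show ?thesis using True by simp
  next
    case False
    have "x^2 \<le> (2 * A * sqrt y)^2" using 1 x0 by (intro power_mono) auto
    also have "\<dots> = 4 * A^2 * y" using y1 by (simp add: power_mult_distrib)
    also have "\<dots> \<le> 4 * A^2 * (3 * x)" unfolding y_def using False by (intro mult_left_mono) auto
    finally have "x * x \<le> x * (12 * A^2)" by (simp add: power2_eq_square algebra_simps)
    thus ?thesis using False by simp
  qed
  have "1 \<le> A^2" using A1 by simp
  hence "y \<le> 25 * A^2" unfolding y_def using x12 by linarith
  hence "ln y \<le> ln (25 * A^2)" using y1 by (subst ln_le_cancel_iff) auto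
  also have "\<dots> = ln 25 + 2 * ln A" using A1 by (simp add: ln_mult ln_realpow)
  finally have "A * ln y \<le> A * (ln 25 + 2 * ln A)" using A1 by (intro mult_left_mono) auto
  thus ?thesis using h unfolding y_def by simp
qed

lemma ln2_half: "ln (2::real) \<ge> 1/2"
proof -
  have "exp (1/2::real) * exp (1/2) = exp 1" by (simp flip: exp_add)
  also have "\<dots> \<le> 3" by (rule exp_le)
  finally have e3: "exp (1/2::real) * exp (1/2) \<le> 3" .
  have "exp (1/2::real) < 2"
  proof (rule ccontr)
    assume "\<not> exp (1/2::real) < 2"
    hence "2 \<le> exp (1/2::real)" by simp
    hence "2 * 2 \<le> exp (1/2::real) * exp (1/2)" by (intro mult_mono) auto
    thus False using e3 by simp
  qed
  hence "ln (exp (1/2::real)) < ln 2" by (subst ln_less_cancel_iff) auto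
  thus ?thesis by simp
qed


lemma fat_m_bound:
  assumes k1: "k \<ge> 1" and apos: "0 < \<alpha>" and a1: "\<alpha> \<le> 1"
    and sh: "seq_shattered (Hkd k d) (Xdom d) \<alpha> m xt st"
  shows "real m \<le> 10^7 * real k ^ 2 / \<alpha> ^ 2 * (ln (exp 1 * real k / \<alpha>)) ^ 3"
proof -
  define R where "R = exp 1 * real k / \<alpha>"
  define Lg where "Lg = ln R"
  have ka: "real k / \<alpha> \<ge> 1" using k1 a1 apos by (simp add: field_simps)
  have e2: "exp (1::real) \<ge> 2" using exp_ge_add_one_self[of "1::real"] by simp
  have Rge: "R \<ge> exp 1"
  proof -
    have "exp 1 * 1 \<le> exp 1 * (real k / \<alpha>)" using ka by (intro mult_left_mono) auto
    thus ?thesis unfolding R_def by simp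
  qed
  have Rpos: "R > 0" using Rge by (meson exp_gt_zero less_le_trans)
  have Lg1: "Lg \<ge> 1"
  proof -
    have "ln (exp 1) \<le> ln R" using Rge Rpos by (subst ln_le_cancel_iff) auto
    thus ?thesis unfolding Lg_def by simp
  qed
  have goal_pos: "0 \<le> 10^7 * real k ^ 2 / \<alpha> ^ 2 * Lg ^ 3" using Lg1 by simp
  show ?thesis
  proof (cases "m = 0")
    case True
    then show ?thesis using goal_pos unfolding Lg_def R_def by simp
  next
    case False
    hence m1: "m \<ge> 1" by simp
    define r where "r = 2 * real k / \<alpha>"
    have r2: "r \<ge> 2" proof - have "r = 2 * (real k / \<alpha>)" unfolding r_def by simp thus ?thesis using ka by linarith qed
    have rR: "r \<le> R" unfolding r_def R_def using e2 apos k1 by (simp add: field_simps)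
    define J where "J = nat \<lceil>log 2 r\<rceil>"
    have lg1: "log 2 r \<ge> 1" using r2 by simp
    have Jc: "real J = of_int \<lceil>log 2 r\<rceil>" unfolding J_def using lg1 by simp
    have Jge: "real J \<ge> log 2 r" unfolding Jc by (rule le_of_int_ceiling)
    have J2: "2^J * \<alpha> \<ge> 2 * real k"
    proof -
      have "r = 2 powr (log 2 r)" using r2 by simp
      also have "\<dots> \<le> 2 powr (real J)" using Jge by (intro powr_mono) auto
      also have "\<dots> = 2^J" by (simp add: powr_realpow)
      finally have "r \<le> 2^J" .
      hence "r * \<alpha> \<le> 2^J * \<alpha>" using apos by (intro mult_right_mono) auto
      thus ?thesis unfolding r_def using apos by simp
    qed
    have J3: "real J \<le> 3 * Lg"
    proof -
      have "real J \<le> log 2 r + 1" unfolding Jc by (rule of_int_ceiling_le_add_one)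
      moreover have "log 2 r \<le> 2 * Lg"
      proof -
        have lr: "ln r \<le> Lg" unfolding Lg_def using rR r2 by (subst ln_le_cancel_iff) auto
        have lr0: "ln r \<ge> 0" using r2 by simp
        have "log 2 r = ln r / ln 2" by (simp add: log_def)
        also have "\<dots> \<le> ln r / (1/2)" using ln2_half lr0 by (intro divide_left_mono) auto
        also have "\<dots> \<le> 2 * Lg" using lr by simp
        finally show ?thesis .
      qed
      ultimately show ?thesis using Lg1 by linarith
    qed
    define ll where "ll = ln (2 * real m + 1)"
    have ll0: "ll \<ge> 0" unfolding ll_def by simp
    have "real m * \<alpha>^2 \<le> 225 * real k^2 * real J^2 * ll"
      unfolding ll_def by (rule bound_m[OF sh apos m1 J2])
    also have "\<dots> \<le> 225 * real k^2 * (3 * Lg)^2 * ll"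
      using J3 ll0 by (intro mult_right_mono mult_left_mono power_mono) auto
    finally have h1: "real m * \<alpha>^2 \<le> 2025 * real k^2 * Lg^2 * ll" by (simp add: power_mult_distrib)
    define A where "A = 2025 * real k^2 * Lg^2 / \<alpha>^2"
    have hA: "real m \<le> A * ll" unfolding A_def using h1 apos by (simp add: field_simps)
    have A1: "A \<ge> 1"
    proof -
      have "(real k / \<alpha>)^2 \<ge> 1" using ka by simp
      moreover have "Lg^2 \<ge> 1" using Lg1 by simp
      ultimately have "1 * 1 \<le> (real k / \<alpha>)^2 * Lg^2" by (intro mult_mono) auto
      hence "(real k / \<alpha>)^2 * Lg^2 \<ge> 1" by simp
      moreover have "A = 2025 * ((real k / \<alpha>)^2 * Lg^2)" unfolding A_def by (simp add: power_divide)
      ultimately show ?thesis by linarith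
    qed
    have sol: "real m \<le> A * (ln 25 + 2 * ln A)"
      by (rule solve_log[OF A1]) (use hA in \<open>auto simp: ll_def\<close>)
    have lnA: "ln A \<le> ln 2025 + 4 * Lg"
    proof -
      have kR: "real k / \<alpha> \<le> R"
      proof -
        have "1 * (real k / \<alpha>) \<le> exp 1 * (real k / \<alpha>)" using e2 ka by (intro mult_right_mono) auto
        thus ?thesis unfolding R_def by simp
      qed
      have LR: "Lg \<le> R" unfolding Lg_def using ln_le_minus_one[OF Rpos] by simp
      have "A = 2025 * (real k / \<alpha>)^2 * Lg^2" unfolding A_def by (simp add: power_divide)
      also have "\<dots> \<le> 2025 * R^2 * R^2"
        using kR LR ka Lg1 by (intro mult_mono power_mono mult_left_mono) auto
      also have "\<dots> = 2025 * R^4" by simp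
      finally have "A \<le> 2025 * R^4" .
      hence "ln A \<le> ln (2025 * R^4)" using A1 by (subst ln_le_cancel_iff) (auto simp: Rpos)
      also have "\<dots> = ln 2025 + 4 * Lg" unfolding Lg_def using Rpos by (simp add: ln_mult ln_realpow)
      finally show ?thesis .
    qed
    have l2025: "ln (2025::real) \<le> 2025" using ln_le_minus_one[of "2025::real"] by simp
    have l25: "ln (25::real) \<le> 25" using ln_le_minus_one[of "25::real"] by simp
    have "ln 25 + 2 * ln A \<le> 4083 * Lg" using lnA l2025 l25 Lg1 by linarith
    hence "A * (ln 25 + 2 * ln A) \<le> A * (4083 * Lg)" using A1 by (intro mult_left_mono) auto
    hence "real m \<le> A * (4083 * Lg)" using sol by linarith
    also have "\<dots> = 2025 * 4083 * real k^2 / \<alpha>^2 * Lg^3" unfolding A_def by (simp add: power2_eq_square power3_eq_cube)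
    also have "\<dots> \<le> 10^7 * real k^2 / \<alpha>^2 * Lg^3"
      using Lg1 apos by (intro mult_right_mono divide_right_mono mult_right_mono) auto
    finally show ?thesis unfolding Lg_def R_def .
  qed
qed


theorem propositionC4:
  shows "\<exists>C::real. C > 0 \<and> (\<forall>d k::nat. \<forall>\<alpha>::real. d \<ge> 1 \<longrightarrow> k \<ge> 1 \<longrightarrow> 0 < \<alpha> \<longrightarrow> \<alpha> \<le> 1 \<longrightarrow>
     ereal_of_enat (seq_fat \<alpha> (Hkd k d) (Xdom d))
       \<le> ereal (C * real k ^ 2 / \<alpha> ^ 2 * (ln (exp 1 * real k / \<alpha>)) ^ 3))"
proof (intro exI[of _ "10^7"] conjI allI impI)
  show "(0::real) < 10^7" by simp
  fix d k :: nat and \<alpha> :: real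
  assume d1: "d \<ge> 1" and k1: "k \<ge> 1" and apos: "0 < \<alpha>" and a1: "\<alpha> \<le> 1"
  define B where "B = 10^7 * real k ^ 2 / \<alpha> ^ 2 * (ln (exp 1 * real k / \<alpha>)) ^ 3"
  have mb: "real m \<le> B" if "m \<in> {m. \<exists>xt st. seq_shattered (Hkd k d) (Xdom d) \<alpha> m xt st}" for m
    using that fat_m_bound[OF k1 apos a1] unfolding B_def by blast
  have B0: "B \<ge> 0"
  proof -
    have ka: "real k / \<alpha> \<ge> 1" using k1 a1 apos by (simp add: field_simps)
    have "1 * 1 \<le> exp 1 * (real k / \<alpha>)" using ka by (intro mult_mono) auto
    hence "ln (exp 1 * real k / \<alpha>) \<ge> 0" by simp
    thus ?thesis unfolding B_def by simp
  qed
  have "seq_fat \<alpha> (Hkd k d) (Xdom d) \<le> enat (nat \<lfloor>B\<rfloor>)"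
    unfolding seq_fat_def
  proof (rule Sup_least)
    fix x assume "x \<in> enat ` {m. \<exists>xt st. seq_shattered (Hkd k d) (Xdom d) \<alpha> m xt st}"
    then obtain m where x: "x = enat m" and m: "m \<in> {m. \<exists>xt st. seq_shattered (Hkd k d) (Xdom d) \<alpha> m xt st}" by auto
    have "m \<le> nat \<lfloor>B\<rfloor>" using mb[OF m] by (simp add: le_nat_floor)
    thus "x \<le> enat (nat \<lfloor>B\<rfloor>)" unfolding x by simp
  qed
  hence "ereal_of_enat (seq_fat \<alpha> (Hkd k d) (Xdom d)) \<le> ereal_of_enat (enat (nat \<lfloor>B\<rfloor>))"
    by (simp only: ereal_of_enat_le_iff)
  also have "\<dots> = ereal (real (nat \<lfloor>B\<rfloor>))" by simp
  also have "\<dots> \<le> ereal B" using B0 by simp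
  finally show "ereal_of_enat (seq_fat \<alpha> (Hkd k d) (Xdom d)) \<le> ereal (10^7 * real k ^ 2 / \<alpha> ^ 2 * (ln (exp 1 * real k / \<alpha>)) ^ 3)"
    unfolding B_def .
qed

end
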